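(* Let $\mu, t \in \mathbb{R}$ and $\sigma > 0$. Let $\mathcal{L}_S(\mu,\sigma)$ be the set of all probability distributions $F$ on $\mathbb{R}$ such that, for $X \sim F$, $\mathbb{E}^F[X]=\mu$, $\mathbb{E}^F[X^2]=\mu^2+\sigma^2$, and $F$ is symmetric. Then \[ \sup_{F \in \mathcal{L}_{S}(\mu, \sigma)}\mathbb{E}^{F}[(X-t)_{+}^2]= \begin{cases} \sigma^2 + (t-\mu)^2, & t \le \mu-\sigma,\\ \frac{1}{2}(\mu- t+\sigma)^2, & \mu-\sigma < t\leq \mu,\\ \frac{\sigma^2}{2}, & t > \mu. \end{cases} \]
   Context: For $x\in\mathbb{R}$, $(x)_+=\max\{x,0\}$. A distribution $F$ of a random variable $X$ is called symmetric if there exists a constant $a\in\mathbb{R}$ such that $\mathbb{P}(X-a>x)=\mathbb{P}(X-a<-x)$ for all $x\in\mathbb{R}$ under $F$. $\mathbb{E}^F$ denotes expectation when $X$ has distribution $F$. *)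

theory Defs
  imports "HOL-Probability.Probability"
begin

text \<open>A distribution F on the reals is represented as a probability measure on the
  Borel sets of the reals; X is the identity random variable.\<close>

definition symmetric_distr :: "real measure \<Rightarrow> bool" where
  "symmetric_distr F \<longleftrightarrow>
     (\<exists>a::real. \<forall>x::real. measure F {y. y - a > x} = measure F {y. y - a < - x})"

definition L_S :: "real \<Rightarrow> real \<Rightarrow> real measure set" where
  "L_S \<mu> \<sigma> = {F. prob_space F \<and> sets F = sets borel
      \<and> integrable F (\<lambda>x. x) \<and> integral\<^sup>L F (\<lambda>x. x) = \<mu>
      \<and> integrable F (\<lambda>x. x ^ 2) \<and> integral\<^sup>L F (\<lambda>x. x ^ 2) = \<mu>^2 + \<sigma>^2
      \<and> symmetric_distr F}"

definition pos_part :: "real \<Rightarrow> real" where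
  "pos_part x = max x 0"

end

theory Submission
  imports Defs
begin

definition w3 :: "real \<Rightarrow> real \<Rightarrow> real \<Rightarrow> real \<Rightarrow> real" where
  "w3 m M p x = (if x = m + M \<or> x = m - M then p/2 else if x = m then 1 - p else 0)"

definition F3 :: "real \<Rightarrow> real \<Rightarrow> real \<Rightarrow> real measure" where
  "F3 m M p = distr (measure_pmf (embed_pmf (w3 m M p))) borel (\<lambda>x. x)"

lemma w3_props:
  assumes "0 < M" "0 \<le> p" "p \<le> 1"
  shows "\<And>x. 0 \<le> w3 m M p x" "(\<integral>\<^sup>+x. w3 m M p x \<partial>count_space UNIV) = 1"
proof -
  show "\<And>x. 0 \<le> w3 m M p x" using assms by (auto simp: w3_def)
  have "(\<integral>\<^sup>+x. w3 m M p x \<partial>count_space UNIV) = (\<Sum>x\<in>{m+M, m, m-M}. ennreal (w3 m M p x))"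
    by (rule nn_integral_count_space') (auto simp: w3_def)
  also have "\<dots> = ennreal (w3 m M p (m+M)) + ennreal (w3 m M p m) + ennreal (w3 m M p (m-M))"
    using assms by simp
  also have "\<dots> = ennreal (p/2 + (1-p) + p/2)"
    using assms by (simp add: w3_def ennreal_plus[symmetric] del: ennreal_plus)
  also have "\<dots> = 1" by simp
  finally show "(\<integral>\<^sup>+x. w3 m M p x \<partial>count_space UNIV) = 1" .
qed

lemma pmf_w3:
  assumes "0 < M" "0 \<le> p" "p \<le> 1"
  shows "pmf (embed_pmf (w3 m M p)) x = w3 m M p x"
  using pmf_embed_pmf[OF w3_props(1)[OF assms] w3_props(2)[OF assms]] .

lemma set_pmf_w3:
  assumes "0 < M" "0 \<le> p" "p \<le> 1"
  shows "set_pmf (embed_pmf (w3 m M p)) \<subseteq> {m+M, m, m-M}"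
  using assms by (auto simp: set_pmf_eq pmf_w3 w3_def split: if_splits)

lemma F3_basic:
  assumes "0 < M" "0 \<le> p" "p \<le> 1"
  shows "prob_space (F3 m M p)" "sets (F3 m M p) = sets borel"
  unfolding F3_def by (auto intro!: prob_space.prob_space_distr simp: prob_space_measure_pmf)

lemma F3_integrable:
  assumes "0 < M" "0 \<le> p" "p \<le> 1" "g \<in> borel_measurable borel"
  shows "integrable (F3 m M p) (g :: real \<Rightarrow> real)"
  unfolding F3_def
  apply (subst integrable_distr_eq)
  using assms finite_subset[OF set_pmf_w3[OF assms(1-3)]]
  by (auto intro!: integrable_measure_pmf_finite)

lemma F3_integral:
  assumes "0 < M" "0 \<le> p" "p \<le> 1" "g \<in> borel_measurable borel"
  shows "integral\<^sup>L (F3 m M p) (g :: real \<Rightarrow> real) = p/2 * g (m+M) + (1-p) * g m + p/2 * g (m-M)"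
proof -
  have "integral\<^sup>L (F3 m M p) g = (\<integral>x. g x \<partial>measure_pmf (embed_pmf (w3 m M p)))"
    unfolding F3_def using assms by (subst integral_distr) auto
  also have "\<dots> = (\<Sum>a\<in>{m+M, m, m-M}. g a * pmf (embed_pmf (w3 m M p)) a)"
    by (rule integral_measure_pmf_real) (use set_pmf_w3[OF assms(1-3)] in auto)
  also have "\<dots> = p/2 * g (m+M) + (1-p) * g m + p/2 * g (m-M)"
    using assms by (simp add: pmf_w3 w3_def algebra_simps)
  finally show ?thesis .
qed


lemma F3_space: "space (F3 m M p) = UNIV"
  unfolding F3_def by simp

lemma F3_in_LS:
  assumes "0 < M" "0 \<le> p" "p \<le> 1" "p * M^2 = \<sigma>^2"
  shows "F3 m M p \<in> L_S m \<sigma>"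
proof -
  note b = assms(1-3)
  have sym: "symmetric_distr (F3 m M p)"
    unfolding symmetric_distr_def
  proof (intro exI[of _ m] allI)
    fix x :: real
    have "measure (F3 m M p) {y. y - m > x} = integral\<^sup>L (F3 m M p) (indicator {y. y - m > x})"
      by (simp add: F3_space)
    also have "\<dots> = p/2 * indicator {y. y - m > x} (m+M) + (1-p) * indicator {y. y - m > x} m
        + p/2 * indicator {y. y - m > x} (m-M)"
    proof -
      have e: "{y. y - m > x} = {m + x <..}" by auto
      show ?thesis unfolding e by (rule F3_integral[OF b]) simp
    qed
    also have "\<dots> = p/2 * indicator {y. y - m < -x} (m-M) + (1-p) * indicator {y. y - m < -x} m
        + p/2 * indicator {y. y - m < -x} (m+M)"
      by (simp add: indicator_def)
    also have "\<dots> = integral\<^sup>L (F3 m M p) (indicator {y. y - m < -x})"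
    proof -
      have e: "{y. y - m < -x} = {..< m - x}" by auto
      have "integral\<^sup>L (F3 m M p) (indicator {..< m - x}) = p/2 * indicator {..< m - x} (m+M) + (1-p) * indicator {..< m - x} m
        + p/2 * indicator {..< m - x} (m-M)"
        by (rule F3_integral[OF b]) simp
      thus ?thesis unfolding e by linarith
    qed
    also have "\<dots> = measure (F3 m M p) {y. y - m < -x}"
      by (simp add: F3_space)
    finally show "measure (F3 m M p) {y. y - m > x} = measure (F3 m M p) {y. y - m < -x}" .
  qed
  have i1: "integral\<^sup>L (F3 m M p) (\<lambda>x. x) = m"
    by (subst F3_integral[OF b]) (auto simp: field_simps)
  have i2: "integral\<^sup>L (F3 m M p) (\<lambda>x. x^2) = m^2 + \<sigma>^2"
  proof -
    have "integral\<^sup>L (F3 m M p) (\<lambda>x. x^2) = m^2 + p * M^2"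
      by (subst F3_integral[OF b]) (auto simp: field_simps power2_eq_square)
    thus ?thesis using assms(4) by simp
  qed
  have j1: "integrable (F3 m M p) (\<lambda>x. x)" by (rule F3_integrable[OF b]) simp
  have j2: "integrable (F3 m M p) (\<lambda>x. x^2)" by (rule F3_integrable[OF b]) simp
  show ?thesis unfolding L_S_def
    using F3_basic[OF b] j1 j2 i1 i2 sym by blast
qed

lemma LS_sym:
  assumes "F \<in> L_S \<mu> \<sigma>" "f \<in> borel_measurable borel"
  shows "integral\<^sup>L F (f :: real \<Rightarrow> real) = integral\<^sup>L F (\<lambda>x. f (2*\<mu> - x))"
proof -
  from assms(1) have P: "prob_space F" and S: "sets F = sets borel"
    and int1: "integrable F (\<lambda>x. x)" and mu: "integral\<^sup>L F (\<lambda>x. x) = \<mu>"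
    and sd: "symmetric_distr F"
    by (auto simp: L_S_def)
  interpret prob_space F by fact
  have sp: "space F = UNIV" using sets_eq_imp_space_eq[OF S] by simp
  from sd obtain a where a: "\<And>x. measure F {y. y - a > x} = measure F {y. y - a < - x}"
    unfolding symmetric_distr_def by blast
  define G where "G = distr F borel (\<lambda>x. 2*a - x)"
  have rdF: "real_distribution F" by unfold_locales (use S in auto)
  have meas: "(\<lambda>x. 2*a - x) \<in> measurable F borel" unfolding measurable_cong_sets[OF S refl] by simp
  have rdG: "real_distribution G" unfolding G_def
    by (rule real_distribution.intro, rule prob_space_distr[OF meas])
      (simp add: real_distribution_axioms_def)
  have "cdf G = cdf F"
  proof
    fix c :: real
    have "cdf G c = measure F ((\<lambda>x. 2*a - x) -` {..c} \<inter> space F)"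
      unfolding cdf_def2 G_def by (subst measure_distr[OF meas]) auto
    also have "(\<lambda>x. 2*a - x) -` {..c} \<inter> space F = UNIV - {y. y - a < -(c - a)}"
      using sp by auto
    also have "measure F \<dots> = 1 - measure F {y. y - a < -(c - a)}"
      using prob_compl[of "{y. y - a < -(c - a)}"] sp S by auto
    also have "\<dots> = 1 - measure F {y. y - a > c - a}" using a[of "c - a"] by simp
    also have "{y. y - a > c - a} = UNIV - {..c}" by auto
    also have "1 - measure F (UNIV - {..c}) = measure F {..c}"
      using prob_compl[of "{..c}"] sp S by auto
    finally show "cdf G c = cdf F c" by (simp add: cdf_def2)
  qed
  hence GF: "G = F" using cdf_unique[OF rdG rdF] by simp
  have gen: "integral\<^sup>L F g = integral\<^sup>L F (\<lambda>x. g (2*a - x))" if "g \<in> borel_measurable borel" for g :: "real \<Rightarrow> real"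
  proof -
    have "integral\<^sup>L F g = integral\<^sup>L G g" using GF by simp
    also have "\<dots> = integral\<^sup>L F (\<lambda>x. g (2*a - x))"
      unfolding G_def by (rule integral_distr[OF meas that])
    finally show ?thesis .
  qed
  have "\<mu> = integral\<^sup>L F (\<lambda>x. 2*a - x)" using gen[of "\<lambda>x. x"] mu by simp
  also have "\<dots> = integral\<^sup>L F (\<lambda>x. 2*a) - integral\<^sup>L F (\<lambda>x. x)"
    by (rule Bochner_Integration.integral_diff) (simp_all add: int1)
  also have "\<dots> = 2*a - \<mu>" using mu by (simp add: prob_space)
  finally have "a = \<mu>" by simp
  thus ?thesis using gen[OF assms(2)] by simp
qed

lemma LS_int:
  assumes "F \<in> L_S \<mu> \<sigma>" "g \<in> borel_measurable borel" "\<And>x. \<bar>g x\<bar> \<le> a + b * x^2"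
  shows "integrable F (g :: real \<Rightarrow> real)"
proof -
  from assms(1) have P: "prob_space F" and S: "sets F = sets borel"
    and i2: "integrable F (\<lambda>x. x^2)"
    by (auto simp: L_S_def)
  interpret prob_space F by fact
  have ib: "integrable F (\<lambda>x. a + b * x^2)"
    using i2 by simp
  show ?thesis
  proof (rule Bochner_Integration.integrable_bound[OF ib])
    show "g \<in> borel_measurable F" using assms(2) unfolding measurable_cong_sets[OF S refl] .
    show "AE x in F. norm (g x) \<le> norm (a + b * x^2)"
      using assms(3) by (auto intro!: AE_I2 order_trans[OF _ abs_ge_self])
  qed
qed

lemma LS_moments:
  assumes "F \<in> L_S \<mu> \<sigma>"
  shows "integral\<^sup>L F (\<lambda>x. c0 + c2 * (x - \<mu>)^2) = c0 + c2 * \<sigma>^2"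
proof -
  from assms have P: "prob_space F" and i1: "integrable F (\<lambda>x. x)"
    and m1: "integral\<^sup>L F (\<lambda>x. x) = \<mu>"
    and i2: "integrable F (\<lambda>x. x^2)" and m2: "integral\<^sup>L F (\<lambda>x. x^2) = \<mu>^2 + \<sigma>^2"
    by (auto simp: L_S_def)
  interpret prob_space F by fact
  have e: "(\<lambda>x. c0 + c2 * (x - \<mu>)^2) = (\<lambda>x. (c0 + c2 * \<mu>^2) + (c2 * x^2 - (2 * c2 * \<mu>) * x))"
    by (auto simp: power2_eq_square algebra_simps)
  have "integral\<^sup>L F (\<lambda>x. (c0 + c2 * \<mu>^2) + (c2 * x^2 - (2 * c2 * \<mu>) * x))
      = (c0 + c2 * \<mu>^2) + (c2 * integral\<^sup>L F (\<lambda>x. x^2) - (2 * c2 * \<mu>) * integral\<^sup>L F (\<lambda>x. x))"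
    using i1 i2 by (simp add: prob_space)
  also have "\<dots> = c0 + c2 * \<sigma>^2" using m1 m2 by (simp add: power2_eq_square algebra_simps)
  finally show ?thesis unfolding e .
qed

lemma LS_bound:
  assumes "F \<in> L_S \<mu> \<sigma>" "f \<in> borel_measurable borel"
    "integrable F f" "integrable F (\<lambda>x. f (2*\<mu> - x))"
    "\<And>x. (f x + f (2*\<mu> - x)) / 2 \<le> c0 + c2 * (x - \<mu>)^2"
  shows "integral\<^sup>L F (f :: real \<Rightarrow> real) \<le> c0 + c2 * \<sigma>^2"
proof -
  from assms(1) have P: "prob_space F" by (auto simp: L_S_def)
  interpret prob_space F by fact
  have pw: "\<bar>c0 + c2 * (x - \<mu>)^2\<bar> \<le> (\<bar>c0\<bar> + 2 * \<bar>c2\<bar> * \<mu>^2) + (2 * \<bar>c2\<bar>) * x^2" for x :: real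
  proof -
    have q: "(x-\<mu>)^2 \<le> 2*x^2 + 2*\<mu>^2"
      using zero_le_power2[of "x + \<mu>"] by (simp add: power2_eq_square algebra_simps)
    have "\<bar>c0 + c2 * (x - \<mu>)^2\<bar> \<le> \<bar>c0\<bar> + \<bar>c2\<bar> * (x - \<mu>)^2"
      using abs_triangle_ineq[of c0 "c2 * (x - \<mu>)^2"] by (simp add: abs_mult)
    also have "\<dots> \<le> \<bar>c0\<bar> + \<bar>c2\<bar> * (2*x^2 + 2*\<mu>^2)"
      using mult_left_mono[OF q, of "\<bar>c2\<bar>"] by simp
    finally show ?thesis by (simp add: algebra_simps)
  qed
  have ib: "integrable F (\<lambda>x. c0 + c2 * (x - \<mu>)^2)"
    by (rule LS_int[OF assms(1) _ pw]) simp
  have "integral\<^sup>L F f = (integral\<^sup>L F f + integral\<^sup>L F (\<lambda>x. f (2*\<mu> - x))) / 2"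
    using LS_sym[OF assms(1,2)] by simp
  also have "\<dots> = integral\<^sup>L F (\<lambda>x. (f x + f (2*\<mu> - x)) / 2)"
    using assms(3,4) by simp
  also have "\<dots> \<le> integral\<^sup>L F (\<lambda>x. c0 + c2 * (x - \<mu>)^2)"
    by (rule integral_mono) (use assms(3,4,5) ib in auto)
  also have "\<dots> = c0 + c2 * \<sigma>^2" by (rule LS_moments[OF assms(1)])
  finally show ?thesis .
qed

lemma sup_char:
  fixes g :: "'a \<Rightarrow> real"
  assumes "S \<noteq> {}" "\<And>x. x \<in> S \<Longrightarrow> g x \<le> v" "\<And>e. e > 0 \<Longrightarrow> \<exists>x\<in>S. v - e < g x"
  shows "(SUP x\<in>S. g x) = v"
proof (rule antisym)
  show "(SUP x\<in>S. g x) \<le> v" using assms(1,2) by (rule cSUP_least)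
  have bdd: "bdd_above (g ` S)" using assms(2) by (metis bdd_aboveI2)
  show "v \<le> (SUP x\<in>S. g x)"
  proof (rule field_le_epsilon)
    fix e :: real assume "e > 0"
    then obtain x where "x \<in> S" "v - e < g x" using assms(3) by blast
    moreover have "g x \<le> (SUP x\<in>S. g x)" using bdd \<open>x \<in> S\<close> by (rule cSUP_upper2) simp
    ultimately show "v \<le> (SUP x\<in>S. g x) + e" by linarith
  qed
qed

lemma PA: "(max (u+s) 0)^2 + (max (s-u) 0)^2 \<le> 2 * (s^2 + (u::real)^2)"
proof -
  have "(max (u+s) 0)^2 \<le> (u+s)^2" by (cases "u+s \<ge> 0") (auto simp: max_def)
  moreover have "(max (s-u) 0)^2 \<le> (s-u)^2" by (cases "s-u \<ge> 0") (auto simp: max_def)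
  ultimately show ?thesis by (simp add: power2_eq_square algebra_simps)
qed

lemma PC: assumes "s < 0" shows "(max (u+s) 0)^2 + (max (s-u) 0)^2 \<le> (u::real)^2"
proof (cases "u \<ge> 0")
  case True
  hence "max (s-u) 0 = 0" using assms by simp
  moreover have "(max (u+s) 0)^2 \<le> u^2"
    using True assms by (cases "u+s \<ge> 0") (auto simp: max_def intro!: power_mono)
  ultimately show ?thesis by simp
next
  case False
  hence "max (u+s) 0 = 0" using assms by simp
  moreover have "(max (s-u) 0)^2 \<le> u^2"
  proof (cases "s-u \<ge> 0")
    case True
    have "(s-u)^2 \<le> (-u)^2" by (rule power_mono) (use True False assms in auto)
    thus ?thesis using True by (simp add: max_def)
  qed (simp add: max_def)
  ultimately show ?thesis by simp
qed

lemma PB: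
  fixes u s \<sigma> :: real
  assumes "0 \<le> s" "s < \<sigma>"
  shows "\<sigma> * ((max (u+s) 0)^2 + (max (s-u) 0)^2) \<le> (\<sigma>+s) * (\<sigma> * s + u^2)"
proof -
  consider "u \<ge> s" | "u \<le> -s" | "\<bar>u\<bar> \<le> s" by linarith
  thus ?thesis
  proof cases
    case 1
    hence e: "(max (u+s) 0)^2 + (max (s-u) 0)^2 = (u+s)^2" using assms by (simp add: max_def)
    have "0 \<le> s * (\<sigma>-u)^2" using assms by simp
    thus ?thesis unfolding e by (simp add: power2_eq_square algebra_simps)
  next
    case 2
    hence e: "(max (u+s) 0)^2 + (max (s-u) 0)^2 = (s-u)^2" using assms by (simp add: max_def)
    have "0 \<le> s * (\<sigma>+u)^2" using assms by simp
    thus ?thesis unfolding e by (simp add: power2_eq_square algebra_simps)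
  next
    case 3
    hence "max (u+s) 0 = s+u" "max (s-u) 0 = s-u" by (auto simp: abs_le_iff max_def)
    hence e: "(max (u+s) 0)^2 + (max (s-u) 0)^2 = (s+u)^2 + (s-u)^2" by simp
    have "u^2 \<le> s^2" using 3 by (metis abs_le_square_iff abs_of_nonneg assms(1))
    also have "s^2 \<le> \<sigma> * s" using assms by (simp add: power2_eq_square mult_right_mono)
    finally have "0 \<le> (\<sigma> - s) * (\<sigma> * s - u^2)" using assms by simp
    thus ?thesis unfolding e by (simp add: power2_eq_square algebra_simps)
  qed
qed

lemma mx: "(max a 0)^2 \<le> (a::real)^2"
  by (cases "a \<ge> 0") (auto simp: max_def)

lemma sq2: "(a - b)^2 \<le> 2*a^2 + 2*(b::real)^2"
  using zero_le_power2[of "a + b"] by (simp add: power2_eq_square algebra_simps)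

theorem theorem1:
  fixes \<mu> \<sigma> t :: real
  assumes "\<sigma> > 0"
  shows "(SUP F\<in>L_S \<mu> \<sigma>. integral\<^sup>L F (\<lambda>x. (pos_part (x - t))^2)) =
    (if t \<le> \<mu> - \<sigma> then \<sigma>^2 + (t - \<mu>)^2
     else if t \<le> \<mu> then (\<mu> - t + \<sigma>)^2 / 2
     else \<sigma>^2 / 2)"
proof -
  define f where "f = (\<lambda>x::real. (pos_part (x - t))^2)"
  define s where "s = \<mu> - t"
  have fm: "f \<in> borel_measurable borel" unfolding f_def pos_part_def by measurable
  have fe: "f x = (max (x - t) 0)^2" for x unfolding f_def pos_part_def ..
  have fsum: "f x + f (2*\<mu> - x) = (max ((x-\<mu>)+s) 0)^2 + (max (s-(x-\<mu>)) 0)^2" for x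
    unfolding fe s_def by (simp add: algebra_simps)
  have ints: "integrable F f" "integrable F (\<lambda>x. f (2*\<mu> - x))" if F: "F \<in> L_S \<mu> \<sigma>" for F
  proof -
    show "integrable F f"
    proof (rule LS_int[OF F fm])
      fix x
      have "\<bar>f x\<bar> = f x" by (simp add: fe)
      also have "\<dots> \<le> (x - t)^2" unfolding fe by (rule mx)
      also have "\<dots> \<le> 2*x^2 + 2*t^2" by (rule sq2)
      finally show "\<bar>f x\<bar> \<le> 2*t^2 + 2*x^2" by simp
    qed
    show "integrable F (\<lambda>x. f (2*\<mu> - x))"
    proof (rule LS_int[OF F])
      show "(\<lambda>x. f (2*\<mu> - x)) \<in> borel_measurable borel" using fm by measurable
      fix x
      have "\<bar>f (2*\<mu> - x)\<bar> = f (2*\<mu> - x)" by (simp add: fe)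
      also have "\<dots> \<le> ((2*\<mu> - t) - x)^2" unfolding fe by (rule order_trans[OF mx]) (simp add: algebra_simps)
      also have "\<dots> \<le> 2*(2*\<mu> - t)^2 + 2*x^2" by (rule sq2)
      finally show "\<bar>f (2*\<mu> - x)\<bar> \<le> 2*(2*\<mu> - t)^2 + 2*x^2" .
    qed
  qed
  have bound: "integral\<^sup>L F f \<le> c0 + c2 * \<sigma>^2"
    if F: "F \<in> L_S \<mu> \<sigma>" and pw: "\<And>u. ((max (u+s) 0)^2 + (max (s-u) 0)^2) / 2 \<le> c0 + c2 * u^2"
    for F c0 c2
    by (rule LS_bound[OF F fm ints[OF F]]) (unfold fsum, rule pw)
  have mem1: "F3 \<mu> \<sigma> 1 \<in> L_S \<mu> \<sigma>" by (rule F3_in_LS) (use assms in auto)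
  have val1: "integral\<^sup>L (F3 \<mu> \<sigma> 1) f = ((max (\<sigma> + s) 0)^2 + (max (s - \<sigma>) 0)^2) / 2"
    using F3_integral[OF assms _ _ fm, of 1 \<mu>] by (simp add: fe s_def algebra_simps)
  have ne: "L_S \<mu> \<sigma> \<noteq> {}" using mem1 by blast
  consider "t \<le> \<mu> - \<sigma>" | "\<not> t \<le> \<mu> - \<sigma>" "t \<le> \<mu>" | "\<not> t \<le> \<mu>" by linarith
  then show ?thesis
  proof cases
    case 1
    hence s: "s \<ge> \<sigma>" by (simp add: s_def)
    have "(SUP F\<in>L_S \<mu> \<sigma>. integral\<^sup>L F f) = s^2 + 1 * \<sigma>^2"
    proof (rule sup_char[OF ne])
      show "integral\<^sup>L F f \<le> s^2 + 1 * \<sigma>^2" if "F \<in> L_S \<mu> \<sigma>" for F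
        by (rule bound[OF that]) (use PA in \<open>simp add: algebra_simps\<close>)
      show "\<exists>F\<in>L_S \<mu> \<sigma>. s^2 + 1 * \<sigma>^2 - e < integral\<^sup>L F f" if "e > 0" for e
      proof (intro bexI[OF _ mem1])
        have "max (\<sigma> + s) 0 = \<sigma> + s" "max (s - \<sigma>) 0 = s - \<sigma>" using s assms by auto
        hence "integral\<^sup>L (F3 \<mu> \<sigma> 1) f = s^2 + 1 * \<sigma>^2" using val1
          by (simp add: power2_eq_square algebra_simps)
        thus "s^2 + 1 * \<sigma>^2 - e < integral\<^sup>L (F3 \<mu> \<sigma> 1) f" using that by simp
      qed
    qed
    thus ?thesis using 1 by (simp add: f_def s_def power2_commute)
  next
    case 2
    hence s: "0 \<le> s" "s < \<sigma>" by (auto simp: s_def)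
    have "(SUP F\<in>L_S \<mu> \<sigma>. integral\<^sup>L F f) = (\<sigma>+s) * s/2 + (\<sigma>+s)/(2 * \<sigma>) * \<sigma>^2"
    proof (rule sup_char[OF ne])
      show "integral\<^sup>L F f \<le> (\<sigma>+s) * s/2 + (\<sigma>+s)/(2 * \<sigma>) * \<sigma>^2" if "F \<in> L_S \<mu> \<sigma>" for F
      proof (rule bound[OF that])
        fix u
        have "\<sigma> * ((max (u+s) 0)^2 + (max (s-u) 0)^2) \<le> (\<sigma>+s) * (\<sigma> * s + u^2)"
          by (rule PB[OF s])
        thus "((max (u+s) 0)^2 + (max (s-u) 0)^2) / 2 \<le> (\<sigma>+s) * s/2 + (\<sigma>+s)/(2 * \<sigma>) * u^2"
          using assms by (simp add: field_simps)
      qed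
      show "\<exists>F\<in>L_S \<mu> \<sigma>. (\<sigma>+s) * s/2 + (\<sigma>+s)/(2 * \<sigma>) * \<sigma>^2 - e < integral\<^sup>L F f" if "e > 0" for e
      proof (intro bexI[OF _ mem1])
        have "integral\<^sup>L (F3 \<mu> \<sigma> 1) f = (\<sigma>+s)^2/2" using val1 s by (simp add: max_def)
        thus "(\<sigma>+s) * s/2 + (\<sigma>+s)/(2 * \<sigma>) * \<sigma>^2 - e < integral\<^sup>L (F3 \<mu> \<sigma> 1) f"
        proof -
          have "(\<sigma>+s) * s/2 + (\<sigma>+s)/(2 * \<sigma>) * \<sigma>^2 = (\<sigma>+s)^2/2"
            using assms by (simp add: field_simps power2_eq_square)
          thus ?thesis using \<open>integral\<^sup>L (F3 \<mu> \<sigma> 1) f = (\<sigma>+s)^2/2\<close> that by linarith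
        qed
      qed
    qed
    also have "\<dots> = (\<mu> - t + \<sigma>)^2 / 2" using assms by (simp add: s_def field_simps power2_eq_square)
    finally show ?thesis using 2 by (simp add: f_def)
  next
    case 3
    hence s: "s < 0" by (simp add: s_def)
    have "(SUP F\<in>L_S \<mu> \<sigma>. integral\<^sup>L F f) = 0 + 1/2 * \<sigma>^2"
    proof (rule sup_char[OF ne])
      show "integral\<^sup>L F f \<le> 0 + 1/2 * \<sigma>^2" if "F \<in> L_S \<mu> \<sigma>" for F
      proof (rule bound[OF that])
        fix u :: real
        have "(max (u+s) 0)^2 + (max (s-u) 0)^2 \<le> u^2" by (rule PC[OF s])
        thus "((max (u+s) 0)^2 + (max (s-u) 0)^2) / 2 \<le> 0 + 1/2 * u^2" by simp
      qed
      show "\<exists>F\<in>L_S \<mu> \<sigma>. 0 + 1/2 * \<sigma>^2 - e < integral\<^sup>L F f" if e: "e > 0" for e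
      proof -
        define M where "M = \<sigma> - s + \<sigma>^2 * (-s) / e + 1"
        define p where "p = \<sigma>^2 / M^2"
        have M0: "M > 0" "M \<ge> \<sigma>" "M + s > 0" "M > \<sigma>^2 * (-s) / e"
        proof -
          have "0 \<le> \<sigma>^2 * (-s) / e" using s e by (intro divide_nonneg_pos mult_nonneg_nonneg) auto
          thus "M > 0" "M \<ge> \<sigma>" "M + s > 0" "M > \<sigma>^2 * (-s) / e"
            using s assms unfolding M_def by linarith+
        qed
        have p: "0 \<le> p" "p \<le> 1" "p * M^2 = \<sigma>^2"
          using M0 assms by (auto simp: p_def field_simps power_mono)
        have mem: "F3 \<mu> M p \<in> L_S \<mu> \<sigma>" by (rule F3_in_LS[OF M0(1) p])
        have "integral\<^sup>L (F3 \<mu> M p) f = p/2 * f (\<mu>+M) + (1-p) * f \<mu> + p/2 * f (\<mu>-M)"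
          by (rule F3_integral[OF M0(1) p(1,2) fm])
        also have "\<dots> = p/2 * (M + s)^2"
          using s M0 by (simp add: fe s_def max_def algebra_simps)
        also have "\<dots> = \<sigma>^2/2 * ((M + s) / M)^2" using M0 by (simp add: p_def power_divide)
        finally have v: "integral\<^sup>L (F3 \<mu> M p) f = \<sigma>^2/2 * ((M + s) / M)^2" .
        have "1 + 2 * (s / M) \<le> (1 + s / M)^2" by (simp add: power2_eq_square algebra_simps)
        also have "(1 + s / M) = (M + s) / M" using M0 by (simp add: field_simps)
        finally have q: "1 + 2 * (s / M) \<le> ((M + s) / M)^2" .
        have "\<sigma>^2 * (-s) < e * M" using M0(4) e by (simp add: field_simps)
        hence "\<sigma>^2 * (-s) / M < e" using M0 by (simp add: field_simps)
        hence "1/2 * \<sigma>^2 - e < \<sigma>^2/2 * (1 + 2 * (s / M))" by (simp add: field_simps)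
        also have "\<dots> \<le> \<sigma>^2/2 * ((M + s) / M)^2" by (rule mult_left_mono[OF q]) simp
        finally have "1/2 * \<sigma>^2 - e < integral\<^sup>L (F3 \<mu> M p) f" using v by simp
        thus ?thesis using mem by (intro bexI[of _ "F3 \<mu> M p"]) auto
      qed
    qed
    thus ?thesis using 3 assms by (simp add: f_def)
  qed
qed

end
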